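(* Let $\Psi(x)=I_1(x)/I_0(x)$ for $x>0$ and define $$\lambda(x)=\frac{\log\left(1-\frac{2}{x}\Psi(x)\right)}{\log\Psi(x)},\qquad x>0.$$ Then $2<\lambda(x)<4$ for all $x>0$, and $$\lim_{x\to0^+}\lambda(x)=2,\qquad \lim_{x\to\infty}\lambda(x)=4.$$ Consequently the constants $2$ and $4$ are the best possible, i.e. in the inequality $\sqrt{1-\frac1K}<r<\sqrt[4]{1-\frac1K}$, valid for $K>1$ and $r>0$ solving $r=\Psi(2Kr)$, the exponents $\frac12$ and $\frac14$ cannot be improved.
   Context: $I_\nu$ denotes the modified Bessel function of the first kind of order $\nu$. *)

theory Defs
  imports "HOL-Analysis.Analysis"
begin

definition besselI :: "real \<Rightarrow> real \<Rightarrow> real" where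
  "besselI nu x = (\<Sum>k. (x / 2) powr (2 * real k + nu) / (fact k * Gamma (real k + nu + 1)))"

definition Psi :: "real \<Rightarrow> real" where
  "Psi x = besselI 1 x / besselI 0 x"

definition lam :: "real \<Rightarrow> real" where
  "lam x = ln (1 - (2 / x) * Psi x) / ln (Psi x)"

end

theory Submission
  imports Defs "HOL-Real_Asymp.Real_Asymp"
begin


definition aa :: "nat \<Rightarrow> real" where "aa n = 1 / (fact n)^2"
definition bb :: "nat \<Rightarrow> real" where "bb n = 1 / (fact n * fact (Suc n))"
definition cc :: "nat \<Rightarrow> real" where "cc n = (case n of 0 \<Rightarrow> 0 | Suc m \<Rightarrow> bb m)"

definition AA :: "real \<Rightarrow> real" where "AA s = (\<Sum>n. aa n * s^n)"
definition BB :: "real \<Rightarrow> real" where "BB s = (\<Sum>n. bb n * s^n)"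
definition CC :: "real \<Rightarrow> real" where "CC s = (\<Sum>n. cc n * s^n)"

lemma summable_fact_bound:
  assumes "\<And>n. \<bar>c n\<bar> \<le> 1 / fact n"
  shows "summable (\<lambda>n. c n * (y::real)^n)"
proof (rule summable_comparison_test[OF _ summable_exp[of "\<bar>y\<bar>"]])
  show "\<exists>N. \<forall>n\<ge>N. norm (c n * y ^ n) \<le> inverse (fact n) * \<bar>y\<bar> ^ n"
  proof (intro exI allI impI)
    fix n :: nat
    have "norm (c n * y ^ n) = \<bar>c n\<bar> * \<bar>y\<bar>^n" by (simp add: abs_mult power_abs)
    also have "\<dots> \<le> (1 / fact n) * \<bar>y\<bar>^n" by (rule mult_right_mono[OF assms]) simp
    finally show "norm (c n * y ^ n) \<le> inverse (fact n) * \<bar>y\<bar> ^ n" by (simp add: divide_inverse)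
  qed
qed

lemma aa_bound: "\<bar>aa n\<bar> \<le> 1 / fact n"
proof -
  have "(1::real) \<le> fact n" by simp
  hence "fact n \<le> (fact n :: real)^2" by (simp add: power2_eq_square)
  thus ?thesis unfolding aa_def by (simp add: divide_simps)
qed

lemma bb_bound: "\<bar>bb n\<bar> \<le> 1 / fact n"
proof -
  have "(fact n::real) * 1 \<le> fact n * fact (Suc n)"
    by (rule mult_left_mono) (simp_all del: fact_Suc)
  hence "fact n \<le> (fact n :: real) * fact (Suc n)" by simp
  thus ?thesis unfolding bb_def by (simp add: divide_simps)
qed

lemma cc_bound: "\<bar>cc n\<bar> \<le> 1 / fact n"
proof (cases n)
  case 0 thus ?thesis by (simp add: cc_def)
next
  case (Suc m)
  have "(1::real) \<le> fact m" by simp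
  hence "fact (Suc m) \<le> (fact m :: real) * fact (Suc m)" by simp
  thus ?thesis using Suc unfolding cc_def bb_def by (simp add: divide_simps)
qed

lemma sum_aa: "summable (\<lambda>n. aa n * y^n)" by (rule summable_fact_bound[OF aa_bound])
lemma sum_bb: "summable (\<lambda>n. bb n * y^n)" by (rule summable_fact_bound[OF bb_bound])
lemma sum_cc: "summable (\<lambda>n. cc n * y^n)" by (rule summable_fact_bound[OF cc_bound])

lemma diffs_aa: "diffs aa = bb"
proof
  fix n
  show "diffs aa n = bb n"
    unfolding diffs_def aa_def bb_def
    by (simp add: field_simps power2_eq_square del: fact_Suc) (simp add: algebra_simps)
qed

lemma diffs_cc: "diffs cc = aa"
proof
  fix n
  show "diffs cc n = aa n"
    unfolding diffs_def aa_def bb_def cc_def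
    by (simp add: field_simps power2_eq_square del: fact_Suc) (simp add: algebra_simps)
qed

lemma DERIV_AA: "(AA has_real_derivative BB s) (at s)"
  using termdiffs_strong_converges_everywhere[of aa s, OF sum_aa]
  unfolding AA_def BB_def diffs_aa .

lemma DERIV_CC: "(CC has_real_derivative AA s) (at s)"
  using termdiffs_strong_converges_everywhere[of cc s, OF sum_cc]
  unfolding AA_def CC_def diffs_cc .

definition BB' :: "real \<Rightarrow> real" where "BB' s = (\<Sum>n. diffs bb n * s^n)"

lemma DERIV_BB: "(BB has_real_derivative BB' s) (at s)"
  using termdiffs_strong_converges_everywhere[of bb s, OF sum_bb]
  unfolding BB'_def BB_def .

lemma AA0: "AA 0 = 1" unfolding AA_def by (simp only: powser_zero) (simp add: aa_def)
lemma BB0: "BB 0 = 1" unfolding BB_def by (simp only: powser_zero) (simp add: bb_def)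
lemma BB'0: "BB' 0 = 1/2" unfolding BB'_def by (simp only: powser_zero) (simp add: diffs_def bb_def)

lemma CC_eq: "CC s = s * BB s"
proof -
  have "(\<lambda>n. cc (Suc n) * s^(Suc n)) sums (s * BB s)"
    unfolding cc_def BB_def using summable_sums[OF sum_bb[of s]]
    by (simp add: sums_mult mult.assoc mult.left_commute)
  hence "(\<lambda>n. cc n * s^n) sums (s * BB s)" by (subst (asm) sums_Suc_iff) (simp add: cc_def)
  thus ?thesis unfolding CC_def by (rule sums_unique[symmetric])
qed

lemma AA_ge: assumes "s \<ge> 0" shows "AA s \<ge> 1"
proof -
  have "sum (\<lambda>n. aa n * s^n) {0} \<le> (\<Sum>n. aa n * s^n)"
    by (rule sum_le_suminf[OF sum_aa]) (auto simp: aa_def assms)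
  thus ?thesis by (simp add: AA_def aa_def)
qed

lemma BB_ge: assumes "s \<ge> 0" shows "BB s \<ge> 1"
proof -
  have "sum (\<lambda>n. bb n * s^n) {0} \<le> (\<Sum>n. bb n * s^n)"
    by (rule sum_le_suminf[OF sum_bb]) (auto simp: bb_def assms)
  thus ?thesis by (simp add: BB_def bb_def)
qed

lemma besselI0: assumes "x > 0" shows "besselI 0 x = AA (x^2/4)"
proof -
  have "\<And>k. (x / 2) powr (2 * real k + 0) / (fact k * Gamma (real k + 0 + 1)) = aa k * (x^2/4)^k"
  proof -
    fix k
    have "(x / 2) powr (2 * real k + 0) = (x/2)^(2*k)" using assms
      by (simp add: powr_realpow[symmetric])
    also have "\<dots> = (x^2/4)^k" by (simp add: power_mult power_divide)
    finally show "(x / 2) powr (2 * real k + 0) / (fact k * Gamma (real k + 0 + 1)) = aa k * (x^2/4)^k"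
      using Gamma_fact[of k, where 'a=real] by (simp add: aa_def add.commute power2_eq_square)
  qed
  thus ?thesis unfolding besselI_def AA_def by simp
qed

lemma besselI1: assumes "x > 0" shows "besselI 1 x = x/2 * BB (x^2/4)"
proof -
  have "\<And>k. (x / 2) powr (2 * real k + 1) / (fact k * Gamma (real k + 1 + 1)) = x/2 * (bb k * (x^2/4)^k)"
  proof -
    fix k
    have e: "2 * real k + 1 = real (2*k+1)" by simp
    have "(x / 2) powr (2 * real k + 1) = (x / 2) powr (real (2*k+1))" by (simp only: e)
    also have "\<dots> = (x/2)^(2*k+1)" by (rule powr_realpow) (use assms in simp)
    also have "\<dots> = x/2 * (x^2/4)^k" by (simp add: power_mult power_divide)
    finally have P: "(x / 2) powr (2 * real k + 1) = x/2 * (x^2/4)^k" .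
    have G: "Gamma (real k + 1 + 1) = fact (Suc k)"
      using Gamma_fact[of "Suc k", where 'a=real] by (simp add: add.commute)
    show "(x / 2) powr (2 * real k + 1) / (fact k * Gamma (real k + 1 + 1)) = x/2 * (bb k * (x^2/4)^k)"
      unfolding P G by (simp add: bb_def)
  qed
  hence "besselI 1 x = (\<Sum>k. x/2 * (bb k * (x^2/4)^k))" unfolding besselI_def by (simp only:)
  also have "\<dots> = x/2 * BB (x^2/4)" unfolding BB_def by (rule suminf_mult[OF sum_bb])
  finally show ?thesis .
qed


lemma Fzero:
  fixes p x :: real
  assumes p: "p > 0" and x: "x > 0" and F: "1 - 2*p/x - p^4 = 0"
  shows "- (2 * (((1 - p/x - p^2) * x - p) / x^2)) - 4 * p^3 * (1 - p/x - p^2) > 0"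
proof -
  have p4: "p^4 < 1" using F p x by (smt (verit) divide_pos_pos)
  hence p1: "p < 1" using p by (smt (verit) one_le_power)
  have w: "1/x = (1 - p^4) / (2*p)" using F p x by (simp add: field_simps)
  have "- (2 * (((1 - p/x - p^2) * x - p) / x^2)) - 4 * p^3 * (1 - p/x - p^2)
     = -2 * (1 - p*(1/x) - p^2)*(1/x) + 2*p*(1/x)^2 - 4*p^3*(1 - p*(1/x) - p^2)"
    using x by (simp add: field_simps power2_eq_square)
  also have "\<dots> = p * (1 - p^2)^3" unfolding w using p by (simp add: field_simps) algebra
  finally show ?thesis using p p1 by (simp add: power_less_one_iff)
qed

definition hf :: "real \<Rightarrow> real" where "hf x = x / (1/2 + sqrt (x^2 + 9/4))"

lemma DERIV_hf: "(hf has_real_derivative ((1/2 + sqrt (x^2+9/4)) - x * (x / sqrt (x^2+9/4))) / (1/2 + sqrt (x^2+9/4))^2) (at x)"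
proof -
  have pos: "x^2 + 9/4 > 0" by (simp add: add_nonneg_pos)
  have s0: "sqrt (x^2 + 9/4) > 0" using pos by simp
  have dq: "((\<lambda>x. x^2+9/4) has_real_derivative 2*x) (at x)" by (auto intro!: derivative_eq_intros)
  have dsq: "((\<lambda>x. sqrt (x^2+9/4)) has_real_derivative inverse (sqrt (x^2+9/4)) / 2 * (2*x)) (at x)"
    by (rule DERIV_chain2[OF DERIV_real_sqrt[OF pos] dq])
  have dden: "((\<lambda>x. 1/2 + sqrt (x^2+9/4)) has_real_derivative 0 + inverse (sqrt (x^2+9/4)) / 2 * (2*x)) (at x)"
    by (rule DERIV_add[OF DERIV_const dsq])
  have nz: "1/2 + sqrt (x^2+9/4) \<noteq> 0" using s0 by linarith
  have "(hf has_real_derivative ((1 * (1/2 + sqrt (x^2+9/4)) - x * (0 + inverse (sqrt (x^2+9/4)) / 2 * (2*x))) / ((1/2 + sqrt (x^2+9/4)) * (1/2 + sqrt (x^2+9/4))))) (at x)"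
    unfolding hf_def[abs_def] by (rule DERIV_divide[OF DERIV_ident dden nz])
  moreover have "inverse (sqrt (x^2+9/4)) / 2 * (2*x) = x / sqrt (x^2+9/4)" by (simp add: field_simps)
  ultimately show ?thesis by (simp only: power2_eq_square mult_1_left add_0_left)
qed
lemma sq94: "sqrt (9/4) = (3/2::real)" by (rule real_sqrt_unique) (simp_all add: power2_eq_square)

lemma s_facts: assumes x: "x > 0"
  shows "(sqrt (x^2+9/4))^2 = x^2 + 9/4" "sqrt (x^2+9/4) > 3/2"
proof -
  show "(sqrt (x^2+9/4))^2 = x^2 + 9/4" by (simp add: add_nonneg_pos)
  have "sqrt (9/4) < sqrt (x^2+9/4)" using x by simp
  thus "sqrt (x^2+9/4) > 3/2" unfolding sq94 .
qed

lemma hf_part: assumes x: "x > 0"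
  shows "1 - hf x / x - (hf x)^2 = 2 / (1/2 + sqrt (x^2+9/4))^2"
proof -
  define s where "s = sqrt (x^2+9/4)"
  have s2: "s^2 = x^2 + 9/4" and s3: "s > 3/2" using s_facts[OF x] unfolding s_def by auto
  define u where "u = 1/2 + s"
  have u: "u > 0" using s3 unfolding u_def by simp
  have "1 - hf x / x - (hf x)^2 = (u^2 - u - x^2) / u^2"
    unfolding hf_def s_def[symmetric] u_def[symmetric] using x u by (simp add: field_simps power2_eq_square)
  also have "u^2 - u - x^2 = 2" unfolding u_def using s2 by (simp add: power2_eq_square algebra_simps)
  finally show ?thesis unfolding u_def s_def .
qed

lemma Dzero:
  fixes x :: real assumes x: "x > 0"
  shows "1 - hf x / x - (hf x)^2 - ((1/2 + sqrt (x^2+9/4)) - x * (x / sqrt (x^2+9/4))) / (1/2 + sqrt (x^2+9/4))^2 > 0"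
proof -
  define s where "s = sqrt (x^2+9/4)"
  have s2: "s^2 = x^2 + 9/4" and s3: "s > 3/2" using s_facts[OF x] unfolding s_def by auto
  define u where "u = 1/2 + s"
  have u: "u > 0" using s3 unfolding u_def by simp
  have a1: "(1/2 + s) - x * (x / s) = (s/2 + s^2 - x^2) / s" using s3 by (simp add: field_simps power2_eq_square)
  have a2: "s/2 + s^2 - x^2 = s/2 + 9/4" using s2 by simp
  have b: "2 - (s/2 + 9/4) / s = (3 * s / 2 - 9/4) / s" using s3 by (simp add: field_simps)
  have "1 - hf x / x - (hf x)^2 - ((1/2 + s) - x * (x / s)) / (1/2 + s)^2
      = 2 / u^2 - ((s/2 + 9/4) / s) / u^2"
    unfolding hf_part[OF x] a1 a2 unfolding s_def u_def ..
  also have "\<dots> = (2 - (s/2 + 9/4) / s) / u^2" by (simp add: diff_divide_distrib)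
  also have "\<dots> = ((3 * s / 2 - 9/4) / s) / u^2" unfolding b ..
  also have "\<dots> > 0" using s3 u by (intro divide_pos_pos) auto
  finally show ?thesis unfolding s_def .
qed

lemma hf_H: assumes x: "x > 0" shows "(hf x)^2 + 2 * hf x / x - 1 > 0"
proof -
  define s where "s = sqrt (x^2+9/4)"
  have s2: "s^2 = x^2 + 9/4" and s3: "s > 3/2" using s_facts[OF x] unfolding s_def by auto
  define u where "u = 1/2 + s"
  have u: "u > 0" using s3 unfolding u_def by simp
  have "(hf x)^2 + 2 * hf x / x - 1 = (x^2 + 2*u - u^2) / u^2"
    unfolding hf_def s_def[symmetric] u_def[symmetric] using x u by (simp add: field_simps power2_eq_square)
  also have "x^2 + 2*u - u^2 = s - 3/2" unfolding u_def using s2 by (simp add: power2_eq_square algebra_simps)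
  also have "(s - 3/2) / u^2 > 0" using s3 u by (intro divide_pos_pos) auto
  finally show ?thesis .
qed

lemma hf_lt1: assumes x: "x > 0" shows "hf x < 1"
proof -
  have "x < sqrt (x^2+9/4)" by (rule real_less_rsqrt) simp
  hence "x < 1/2 + sqrt (x^2+9/4)" by linarith
  moreover have "0 < 1/2 + sqrt (x^2+9/4)" using s_facts(2)[OF x] by linarith
  ultimately show ?thesis unfolding hf_def by simp
qed

lemma hf_pos: assumes x: "x > 0" shows "hf x > 0"
  unfolding hf_def using x s_facts(2)[OF x] by (intro divide_pos_pos) linarith+


lemma Psi_eq: assumes "x > 0" shows "Psi x = x/2 * BB (x^2/4) / AA (x^2/4)"
  unfolding Psi_def besselI0[OF assms] besselI1[OF assms] ..

lemma Psi_eq2: assumes "x > 0" shows "Psi x = 2 * CC (x^2/4) / (x * AA (x^2/4))"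
  unfolding Psi_eq[OF assms] CC_eq using assms by (simp add: field_simps power2_eq_square)

lemma Psi_pos: assumes "x > 0" shows "Psi x > 0"
  unfolding Psi_eq[OF assms] using assms AA_ge[of "x^2/4"] BB_ge[of "x^2/4"] by simp

lemma DERIV_Psi:
  assumes "x > 0"
  shows "(Psi has_real_derivative (1 - Psi x / x - (Psi x)^2)) (at x)"
proof -
  have ds: "((\<lambda>x. x^2/4) has_real_derivative x/2) (at x)" for x :: real
    by (auto intro!: derivative_eq_intros)
  have dA: "((\<lambda>x. AA (x^2/4)) has_real_derivative BB (x^2/4) * (x/2)) (at x)"
    by (rule DERIV_chain2[OF DERIV_AA ds])
  have dC: "((\<lambda>x. CC (x^2/4)) has_real_derivative AA (x^2/4) * (x/2)) (at x)"
    by (rule DERIV_chain2[OF DERIV_CC ds])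
  have dN: "((\<lambda>x. 2 * CC (x^2/4)) has_real_derivative 2 * (AA (x^2/4) * (x/2))) (at x)"
    by (rule DERIV_cmult[OF dC])
  have dD: "((\<lambda>x. x * AA (x^2/4)) has_real_derivative (1 * AA (x^2/4) + (BB (x^2/4) * (x/2)) * x)) (at x)"
    by (rule DERIV_mult[OF DERIV_ident dA])
  have A1: "AA (x^2/4) \<ge> 1" by (rule AA_ge) simp
  hence nz: "x * AA (x^2/4) \<noteq> 0" using assms by auto
  have dP: "((\<lambda>x. 2 * CC (x^2/4) / (x * AA (x^2/4))) has_real_derivative
      ((2 * (AA (x^2/4) * (x/2))) * (x * AA (x^2/4)) - 2 * CC (x^2/4) * (1 * AA (x^2/4) + (BB (x^2/4) * (x/2)) * x)) / ((x * AA (x^2/4)) * (x * AA (x^2/4)))) (at x)"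
    by (rule DERIV_divide[OF dN dD nz])
  have eqv: "((2 * (AA (x^2/4) * (x/2))) * (x * AA (x^2/4)) - 2 * CC (x^2/4) * (1 * AA (x^2/4) + (BB (x^2/4) * (x/2)) * x)) / ((x * AA (x^2/4)) * (x * AA (x^2/4)))
     = 1 - Psi x / x - (Psi x)^2"
    unfolding Psi_eq[OF assms] CC_eq using assms A1
    by (simp add: field_simps power2_eq_square)
  have "(Psi has_real_derivative (1 - Psi x / x - (Psi x)^2)) (at x)"
    apply (rule has_field_derivative_transform_within_open[OF dP[unfolded eqv], of "{0<..}"])
    using assms Psi_eq2 by auto
  thus ?thesis .
qed

lemma cont_Psi: "continuous_on {0<..} Psi"
  by (rule DERIV_continuous_on[of _ _ "\<lambda>x. 1 - Psi x / x - (Psi x)^2"]) (use DERIV_Psi in \<open>auto intro: has_field_derivative_at_within\<close>)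

lemma crossing:
  fixes f f' :: "real \<Rightarrow> real"
  assumes D: "\<And>x. x > 0 \<Longrightarrow> (f has_real_derivative f' x) (at x)"
    and Z: "\<And>x. x > 0 \<Longrightarrow> f x = 0 \<Longrightarrow> f' x > 0"
    and S: "\<exists>d>0. \<forall>x. 0 < x \<and> x < d \<longrightarrow> f x > 0"
    and x1: "x1 > 0"
  shows "f x1 > 0"
proof (rule ccontr)
  assume neg: "\<not> f x1 > 0"
  obtain d where d: "d > 0" "\<And>x. 0 < x \<Longrightarrow> x < d \<Longrightarrow> f x > 0" using S by auto
  define e where "e = min d x1 / 2"
  have e: "0 < e" "e < x1" "e < d" using d x1 by (auto simp: e_def)
  have fe: "f e > 0" using d e by auto
  have cont: "continuous_on {a..b} f" if "a > 0" for a b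
    by (rule DERIV_continuous_on[of _ _ f']) (use D that in \<open>auto intro: has_field_derivative_at_within\<close>)
  have cont_e: "continuous_on {e..b} f" for b using cont e by auto
  define Zs where "Zs = {t \<in> {e..x1}. f t = 0}"
  have "\<exists>t. e \<le> t \<and> t \<le> x1 \<and> f t = 0"
    by (rule IVT2'[of f x1 0 e]) (use neg fe e cont_e in auto)
  hence ne: "Zs \<noteq> {}" unfolding Zs_def by auto
  have cl: "closed Zs" unfolding Zs_def by (rule continuous_closed_preimage_constant[OF cont_e]) simp
  have bd: "bdd_below Zs" unfolding Zs_def by (rule bdd_belowI[of _ e]) auto
  define m where "m = Inf Zs"
  have mZ: "m \<in> Zs" unfolding m_def by (rule closed_contains_Inf[OF ne bd cl])
  have mle: "m \<le> t" if "t \<in> Zs" for t unfolding m_def by (rule cInf_lower[OF that bd])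
  have fm: "f m = 0" and me: "e \<le> m" using mZ by (auto simp: Zs_def)
  have mpos: "m > 0" using me e by auto
  have me': "e < m" using fm fe me by (cases "e = m") auto
  obtain dd where dd: "dd > 0" "\<And>h. h > 0 \<Longrightarrow> h < dd \<Longrightarrow> f (m - h) < f m"
    using DERIV_pos_inc_left[OF D[OF mpos] Z[OF mpos fm]] by auto
  define h where "h = min dd (m - e) / 2"
  have h: "h > 0" "h < dd" "m - h > e" using dd(1) me' by (auto simp: h_def min_def field_simps)
  have fmh: "f (m - h) < 0" using dd(2)[OF h(1) h(2)] fm by simp
  have "\<exists>t. e \<le> t \<and> t \<le> m - h \<and> f t = 0"
    by (rule IVT2'[of f "m - h" 0 e]) (use fmh fe h cont_e in auto)
  then obtain t where t: "e \<le> t" "t \<le> m - h" "f t = 0" by auto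
  have "t \<in> Zs" using t mZ h unfolding Zs_def by auto
  hence "m \<le> t" by (rule mle)
  thus False using t h by auto
qed


definition QQ :: "real \<Rightarrow> real" where "QQ s = BB s / AA s"

lemma QQ0: "QQ 0 = 1" by (simp add: QQ_def AA0 BB0)

lemma DERIV_QQ0: "(QQ has_real_derivative -1/2) (at 0)"
proof -
  have "(QQ has_real_derivative (BB' 0 * AA 0 - BB 0 * BB 0) / (AA 0 * AA 0)) (at 0)"
    unfolding QQ_def[abs_def] by (rule DERIV_divide[OF DERIV_BB DERIV_AA]) (simp add: AA0)
  thus ?thesis by (simp add: AA0 BB0 BB'0)
qed

lemma Psi_QQ: assumes "x > 0" shows "Psi x = x/2 * QQ (x^2/4)"
  using Psi_eq[OF assms] by (simp add: QQ_def)

definition RR :: "real \<Rightarrow> real" where "RR s = QQ s - 2 / (1/2 + sqrt (4 * s + 9/4))"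

lemma sq0: "sqrt (4*0+9/4::real) = 3/2" by (simp only: mult_zero_right add_0_left sq94)

lemma RR0: "RR 0 = 0" unfolding RR_def QQ0 sq0 by simp

lemma DERIV_RR0: "(RR has_real_derivative 1/6) (at 0)"
proof -
  have pos: "(0::real) < 4*0 + 9/4" by simp
  have dq: "((\<lambda>s::real. 4 * s+9/4) has_real_derivative 4) (at 0)" by (auto intro!: derivative_eq_intros)
  have dsq: "((\<lambda>s. sqrt (4 * s+9/4)) has_real_derivative inverse (sqrt (4*0+9/4)) / 2 * 4) (at 0)"
    by (rule DERIV_chain2[OF DERIV_real_sqrt[OF pos] dq])
  have dden: "((\<lambda>s. 1/2 + sqrt (4 * s+9/4)) has_real_derivative 0 + inverse (sqrt (4*0+9/4)) / 2 * 4) (at 0)"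
    by (rule DERIV_add[OF DERIV_const dsq])
  have nz: "1/2 + sqrt (4*0+9/4) \<noteq> (0::real)" unfolding sq0 by simp
  have dg: "((\<lambda>s. 2 / (1/2 + sqrt (4 * s+9/4))) has_real_derivative
      (0 * (1/2 + sqrt (4*0+9/4)) - 2 * (0 + inverse (sqrt (4*0+9/4)) / 2 * 4)) / ((1/2 + sqrt (4*0+9/4)) * (1/2 + sqrt (4*0+9/4)))) (at 0)"
    by (rule DERIV_divide[OF DERIV_const dden nz])
  have "(RR has_real_derivative (-1/2) - (0 * (1/2 + sqrt (4*0+9/4)) - 2 * (0 + inverse (sqrt (4*0+9/4)) / 2 * 4)) / ((1/2 + sqrt (4*0+9/4)) * (1/2 + sqrt (4*0+9/4)))) (at 0)"
    unfolding RR_def[abs_def] by (rule DERIV_diff[OF DERIV_QQ0 dg])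
  thus ?thesis unfolding sq0 by simp
qed

definition TT :: "real \<Rightarrow> real" where "TT s = 1 - QQ s - s^2 * (QQ s)^4"

lemma TT0: "TT 0 = 0" by (simp add: TT_def QQ0)

lemma DERIV_TT0: "(TT has_real_derivative 1/2) (at 0)"
proof -
  have d4: "((\<lambda>s. (QQ s)^4) has_real_derivative of_nat 4 * ((-1/2) * (QQ 0)^(4 - Suc 0))) (at 0)"
    by (rule DERIV_power[OF DERIV_QQ0])
  have d2: "((\<lambda>s::real. s^2) has_real_derivative 0) (at 0)" by (auto intro!: derivative_eq_intros)
  have dm: "((\<lambda>s. s^2 * (QQ s)^4) has_real_derivative 0 * (QQ 0)^4 + (of_nat 4 * ((-1/2) * (QQ 0)^(4 - Suc 0))) * 0^2) (at 0)"
    by (rule DERIV_mult[OF d2 d4])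
  have "(TT has_real_derivative (0 - (-1/2)) - (0 * (QQ 0)^4 + (of_nat 4 * ((-1/2) * (QQ 0)^(4 - Suc 0))) * 0^2)) (at 0)"
    unfolding TT_def[abs_def] by (rule DERIV_diff[OF DERIV_diff[OF DERIV_const DERIV_QQ0] dm])
  thus ?thesis by simp
qed

lemma small_pos:
  assumes "(G has_real_derivative l) (at 0)" "l > 0" "G 0 = 0"
  shows "\<exists>d>0. \<forall>x. 0 < x \<and> x < d \<longrightarrow> G (x^2/4) > 0"
proof -
  obtain d0 where d0: "d0 > 0" "\<And>h. h > 0 \<Longrightarrow> h < d0 \<Longrightarrow> G 0 < G (0 + h)"
    using DERIV_pos_inc_right[OF assms(1,2)] by auto
  have "G (x^2/4) > 0" if x: "0 < x" "x < min 1 d0" for x :: real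
  proof -
    have "x^2/4 \<le> x/4" using x by (simp add: power2_eq_square mult_le_cancel_right1 less_imp_le)
    hence "x^2/4 < d0" using x by simp
    moreover have "x^2/4 > 0" using x by simp
    ultimately show "G (x^2/4) > 0" using d0(2)[of "x^2/4"] assms(3) by simp
  qed
  moreover have "min 1 d0 > 0" using d0 by simp
  ultimately show ?thesis by blast
qed

lemma Psi_gt_hf: assumes x: "x > 0" shows "Psi x > hf x"
proof -
  define f' where "f' x = (1 - Psi x / x - (Psi x)^2) - ((1/2 + sqrt (x^2+9/4)) - x * (x / sqrt (x^2+9/4))) / (1/2 + sqrt (x^2+9/4))^2" for x
  have "(\<lambda>x. Psi x - hf x) x > 0"
  proof (rule crossing[of "\<lambda>x. Psi x - hf x" f' x])
    show "((\<lambda>x. Psi x - hf x) has_real_derivative f' x) (at x)" if "x > 0" for x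
      unfolding f'_def by (rule DERIV_diff[OF DERIV_Psi[OF that] DERIV_hf])
    show "f' x > 0" if "x > 0" "Psi x - hf x = 0" for x
      using Dzero[OF that(1)] that(2) unfolding f'_def by simp
    obtain d where d: "d > 0" "\<And>x. 0 < x \<and> x < d \<longrightarrow> RR (x^2/4) > 0"
      using small_pos[OF DERIV_RR0 _ RR0] by auto
    show "\<exists>d>0. \<forall>x. 0 < x \<and> x < d \<longrightarrow> Psi x - hf x > 0"
    proof (intro exI[of _ d] conjI allI impI)
      fix x :: real assume x: "0 < x \<and> x < d"
      have P: "Psi x = x/2 * QQ (x^2/4)" using Psi_QQ x by auto
      have "Psi x - hf x = x/2 * RR (x^2/4)"
        unfolding P RR_def hf_def using x by (simp add: field_simps)
      moreover have "RR (x^2/4) > 0" using d(2) x by blast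
      moreover have "x/2 * RR (x^2/4) > 0" using x \<open>RR (x^2/4) > 0\<close> by simp
      ultimately show "Psi x - hf x > 0" by linarith
    qed (use d in auto)
  qed (use x in auto)
  thus ?thesis by simp
qed

lemma F_pos: assumes x: "x > 0" shows "1 - 2 * Psi x / x - (Psi x)^4 > 0"
proof -
  define f' where "f' x = - ((2 * (1 - Psi x / x - (Psi x)^2) * x - 2 * Psi x * 1) / (x * x))
     - of_nat 4 * ((1 - Psi x / x - (Psi x)^2) * (Psi x)^(4 - Suc 0))" for x
  have "(\<lambda>x. 1 - 2 * Psi x / x - (Psi x)^4) x > 0"
  proof (rule crossing[of "\<lambda>x. 1 - 2 * Psi x / x - (Psi x)^4" f' x])
    show "((\<lambda>x. 1 - 2 * Psi x / x - (Psi x)^4) has_real_derivative f' x) (at x)" if "x > 0" for x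
    proof -
      have d1: "((\<lambda>x. 2 * Psi x) has_real_derivative 2 * (1 - Psi x / x - (Psi x)^2)) (at x)"
        by (rule DERIV_cmult[OF DERIV_Psi[OF that]])
      have d2: "((\<lambda>x. 2 * Psi x / x) has_real_derivative (2 * (1 - Psi x / x - (Psi x)^2) * x - 2 * Psi x * 1) / (x * x)) (at x)"
        by (rule DERIV_divide[OF d1 DERIV_ident]) (use that in simp)
      have d3: "((\<lambda>x. (Psi x)^4) has_real_derivative of_nat 4 * ((1 - Psi x / x - (Psi x)^2) * (Psi x)^(4 - Suc 0))) (at x)"
        by (rule DERIV_power[OF DERIV_Psi[OF that]])
      show ?thesis unfolding f'_def
        using DERIV_diff[OF DERIV_diff[OF DERIV_const d2] d3] by simp
    qed
    show "f' x > 0" if "x > 0" "1 - 2 * Psi x / x - (Psi x)^4 = 0" for x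
    proof -
      have "- (2 * (((1 - Psi x/x - (Psi x)^2) * x - Psi x) / x^2)) - 4 * (Psi x)^3 * (1 - Psi x/x - (Psi x)^2) > 0"
        by (rule Fzero[OF Psi_pos[OF that(1)] that(1)]) (use that(2) in simp)
      moreover have "f' x = - (2 * (((1 - Psi x/x - (Psi x)^2) * x - Psi x) / x^2)) - 4 * (Psi x)^3 * (1 - Psi x/x - (Psi x)^2)"
        unfolding f'_def using that(1) by (simp add: field_simps power2_eq_square)
      ultimately show ?thesis by simp
    qed
    obtain d where d: "d > 0" "\<And>x. 0 < x \<and> x < d \<longrightarrow> TT (x^2/4) > 0"
      using small_pos[OF DERIV_TT0 _ TT0] by auto
    show "\<exists>d>0. \<forall>x. 0 < x \<and> x < d \<longrightarrow> 1 - 2 * Psi x / x - (Psi x)^4 > 0"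
    proof (intro exI[of _ d] conjI allI impI)
      fix x :: real assume x: "0 < x \<and> x < d"
      have P: "Psi x = x/2 * QQ (x^2/4)" using Psi_QQ x by auto
      have "1 - 2 * Psi x / x - (Psi x)^4 = TT (x^2/4)"
        unfolding P TT_def using x by (simp add: field_simps power2_eq_square power4_eq_xxxx)
      thus "1 - 2 * Psi x / x - (Psi x)^4 > 0" using d x by simp
    qed (use d in auto)
  qed (use x in auto)
  thus ?thesis by simp
qed


lemma basic:
  assumes x: "x > 0"
  shows "0 < Psi x" "Psi x < 1" "0 < 1 - 2 * Psi x / x" "1 - 2 * Psi x / x < (Psi x)^2"
        "(Psi x)^4 < 1 - 2 * Psi x / x" "hf x < Psi x"
proof -
  show p: "0 < Psi x" by (rule Psi_pos[OF x])
  have F: "(Psi x)^4 < 1 - 2 * Psi x / x" using F_pos[OF x] by simp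
  thus "(Psi x)^4 < 1 - 2 * Psi x / x" .
  have "2 * Psi x / x > 0" using p x by simp
  hence "(Psi x)^4 < 1" using F by simp
  thus "Psi x < 1" using p by (simp add: power_less_one_iff)
  show "0 < 1 - 2 * Psi x / x" using F p by (smt (verit) zero_less_power)
  have h: "hf x < Psi x" by (rule Psi_gt_hf[OF x])
  thus "hf x < Psi x" .
  have h0: "hf x > 0" by (rule hf_pos[OF x])
  have "(hf x)^2 < (Psi x)^2" using h h0 by (simp add: power_strict_mono)
  moreover have "2 * hf x / x < 2 * Psi x / x" using h x by (simp add: divide_strict_right_mono)
  ultimately show "1 - 2 * Psi x / x < (Psi x)^2" using hf_H[OF x] by linarith
qed

lemma lam_bounds: assumes x: "x > 0" shows "2 < lam x" "lam x < 4"
proof -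
  note b = basic[OF x]
  have lp: "ln (Psi x) < 0" using b by simp
  have "ln (1 - 2 * Psi x / x) < ln ((Psi x)^2)" using b by simp
  hence a2: "ln (1 - 2 * Psi x / x) < 2 * ln (Psi x)" using b by (simp add: ln_realpow)
  have "ln ((Psi x)^4) < ln (1 - 2 * Psi x / x)" using b by simp
  hence a4: "4 * ln (Psi x) < ln (1 - 2 * Psi x / x)" using b by (simp add: ln_realpow)
  show "2 < lam x" unfolding lam_def using lp a2 by (simp add: neg_less_divide_eq)
  show "lam x < 4" unfolding lam_def using lp a4 by (simp add: neg_divide_less_eq)
qed

lemma witness:
  assumes x: "x > 0"
  defines "K \<equiv> x / (2 * Psi x)" and "r \<equiv> Psi x"
  shows "K > 1" "r > 0" "r = Psi (2 * K * r)"
    "c * lam x \<le> 1 \<Longrightarrow> \<not> ((1 - 1/K) powr c < r)"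
    "c * lam x \<ge> 1 \<Longrightarrow> \<not> (r < (1 - 1/K) powr c)"
proof -
  note b = basic[OF x]
  show "r > 0" using b unfolding r_def by simp
  have "2 * Psi x / x < 1" using b by simp
  hence "2 * Psi x < x" using x by (simp add: divide_less_eq)
  thus "K > 1" unfolding K_def using b by simp
  show "r = Psi (2 * K * r)" unfolding K_def r_def using b by simp
  have v: "1 - 1/K = 1 - 2 * Psi x / x" unfolding K_def by simp
  have lp: "ln (Psi x) < 0" using b by simp
  have lv: "ln (1 - 1/K) = lam x * ln (Psi x)" unfolding v lam_def using lp by simp
  have vpos: "1 - 1/K > 0" unfolding v using b by simp
  have ne: "1 - 1/K \<noteq> 0" using vpos by linarith
  have "(1 - 1/K) powr c = exp (c * ln (1 - 1/K))" by (simp only: powr_def if_not_P[OF ne])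
  hence pw: "(1 - 1/K) powr c = exp (c * lam x * ln (Psi x))" unfolding lv by (simp add: mult.assoc)
  have r: "r = exp (ln (Psi x))" unfolding r_def using b by simp
  show "\<not> ((1 - 1/K) powr c < r)" if "c * lam x \<le> 1"
  proof -
    have "(c * lam x - 1) * ln (Psi x) \<ge> 0" using that lp by (intro mult_nonpos_nonpos) auto
    hence "ln (Psi x) \<le> c * lam x * ln (Psi x)" by (simp add: algebra_simps)
    thus ?thesis unfolding pw r by simp
  qed
  show "\<not> (r < (1 - 1/K) powr c)" if "c * lam x \<ge> 1"
  proof -
    have "(c * lam x - 1) * ln (Psi x) \<le> 0" using that lp by (intro mult_nonneg_nonpos) auto
    hence "c * lam x * ln (Psi x) \<le> ln (Psi x)" by (simp add: algebra_simps)
    thus ?thesis unfolding pw r by simp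
  qed
qed


lemma ln_ge: assumes "v > 0" shows "1 - 1/v \<le> ln (v::real)"
proof -
  have "ln (1/v) \<le> 1/v - 1" using assms by (intro ln_le_minus_one) simp
  moreover have "ln (1/v) = - ln v" using assms by (simp add: ln_div)
  ultimately show ?thesis by simp
qed

lemma lam_alt: "lam x = ln (1 - 2 * Psi x / x) / ln (Psi x)" unfolding lam_def by simp

lemma lim0: "(lam \<longlongrightarrow> 2) (at_right 0)"
proof -
  have s0: "((\<lambda>x::real. x^2/4) \<longlongrightarrow> 0) (at_right 0)" by real_asymp
  have ev0: "\<forall>\<^sub>F x in at_right (0::real). 0 < x" by (rule eventually_at_right_less)
  have sl: "filterlim (\<lambda>x::real. x^2/4) (at 0) (at_right 0)"
    by (rule filterlim_atI[OF s0]) (use ev0 in \<open>auto elim: eventually_mono\<close>)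
  have cQ: "isCont QQ 0" by (rule DERIV_isCont[OF DERIV_QQ0])
  have Ql: "((\<lambda>x. QQ (x^2/4)) \<longlongrightarrow> 1) (at_right 0)"
    using isCont_tendsto_compose[OF cQ s0] by (simp add: QQ0)
  have "((\<lambda>y. (QQ y - QQ 0) / (y - 0)) \<longlongrightarrow> -1/2) (at 0)"
    using DERIV_QQ0 by (simp add: has_field_derivative_iff)
  from filterlim_compose[OF this sl]
  have Ml0: "((\<lambda>x. (QQ (x^2/4) - QQ 0) / (x^2/4 - 0)) \<longlongrightarrow> -1/2) (at_right 0)" .
  define M where "M x = - ((QQ (x^2/4) - QQ 0) / (x^2/4 - 0))" for x :: real
  have Ml: "(M \<longlongrightarrow> 1/2) (at_right 0)" unfolding M_def[abs_def] using tendsto_minus[OF Ml0] by simp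
  have num: "((\<lambda>x. ln (M x) - 2 * ln (QQ (x^2/4))) \<longlongrightarrow> ln (1/2) - 2 * ln 1) (at_right 0)"
    by (intro tendsto_intros Ml Ql) auto
  have L: "filterlim (\<lambda>x::real. ln (x/2)) at_bot (at_right 0)" by real_asymp
  have lQ: "((\<lambda>x. ln (QQ (x^2/4))) \<longlongrightarrow> 0) (at_right 0)"
    using tendsto_ln[OF Ql] by simp
  have den: "filterlim (\<lambda>x. ln (QQ (x^2/4)) + ln (x/2)) at_bot (at_right 0)"
    using filterlim_tendsto_add_at_bot_iff[OF lQ] L by simp
  have den': "filterlim (\<lambda>x. ln (QQ (x^2/4)) + ln (x/2)) at_infinity (at_right 0)"
    by (rule filterlim_mono[OF den at_bot_le_at_infinity order_refl])
  have g0: "((\<lambda>x. (ln (M x) - 2 * ln (QQ (x^2/4))) / (ln (QQ (x^2/4)) + ln (x/2))) \<longlongrightarrow> 0) (at_right 0)"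
    by (rule tendsto_divide_0[OF num den'])
  have eq: "\<forall>\<^sub>F x in at_right 0. 2 + (ln (M x) - 2 * ln (QQ (x^2/4))) / (ln (QQ (x^2/4)) + ln (x/2)) = lam x"
    using ev0
  proof (rule eventually_mono)
    fix x :: real assume x: "0 < x"
    note b = basic[OF x]
    have P: "Psi x = x/2 * QQ (x^2/4)" using Psi_QQ x by auto
    define q where "q = QQ (x^2/4)"
    define s where "s = x^2/4"
    have s: "s > 0" using x unfolding s_def by simp
    have q: "q > 0" using b(1) x unfolding P q_def by (simp add: zero_less_mult_iff)
    have v: "1 - 2 * Psi x / x = 1 - q" unfolding P q_def using x by simp
    have q1: "1 - q > 0" using b(3) unfolding v .
    have "M x = - ((q - 1) / (s - 0))" unfolding M_def q_def s_def QQ0 ..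
    also have "\<dots> = (1 - q) / s" by (simp add: minus_divide_left)
    finally have Mx: "M x = (1 - q) / s" .
    have Mpos: "M x > 0" unfolding Mx using q1 s by simp
    have "s = (x/2)^2" unfolding s_def by (simp add: power_divide)
    hence ls: "ln s = 2 * ln (x/2)" using x by (simp add: ln_realpow)
    have l1: "ln (1 - 2 * Psi x / x) = 2 * ln (x/2) + ln (M x)"
    proof -
      have "1 - 2 * Psi x / x = s * M x" unfolding v Mx using s by simp
      hence "ln (1 - 2 * Psi x / x) = ln s + ln (M x)" using s Mpos by (simp add: ln_mult)
      thus ?thesis unfolding ls .
    qed
    have l2: "ln (Psi x) = ln q + ln (x/2)"
    proof -
      have e: "Psi x = q * (x/2)" unfolding P q_def by simp
      have "ln (q * (x/2)) = ln q + ln (x/2)" by (rule ln_mult_pos) (use x q in auto)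
      thus ?thesis unfolding e .
    qed
    have lp: "ln (Psi x) < 0" using b by simp
    show "2 + (ln (M x) - 2 * ln (QQ (x^2/4))) / (ln (QQ (x^2/4)) + ln (x/2)) = lam x"
      unfolding lam_alt l1 q_def[symmetric] using lp unfolding l2
      by (simp add: field_simps)
  qed
  have "((\<lambda>x. 2 + (ln (M x) - 2 * ln (QQ (x^2/4))) / (ln (QQ (x^2/4)) + ln (x/2))) \<longlongrightarrow> 2 + 0) (at_right 0)"
    by (rule tendsto_add[OF tendsto_const g0])
  hence "((\<lambda>x. 2 + (ln (M x) - 2 * ln (QQ (x^2/4))) / (ln (QQ (x^2/4)) + ln (x/2))) \<longlongrightarrow> 2) (at_right 0)" by simp
  thus ?thesis by (rule tendsto_cong[THEN iffD1, rotated]) (rule eq)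
qed

lemma limtop: "(lam \<longlongrightarrow> 4) at_top"
proof -
  have ev0: "\<forall>\<^sub>F x in at_top. (0::real) < x" by (rule eventually_gt_at_top)
  have hl: "(hf \<longlongrightarrow> 1) at_top" unfolding hf_def[abs_def] by real_asymp
  have hl2: "((\<lambda>x. x * (1 - hf x)) \<longlongrightarrow> 1/2) at_top" unfolding hf_def by real_asymp
  have Pl: "(Psi \<longlongrightarrow> 1) at_top"
  proof (rule tendsto_sandwich[OF _ _ hl tendsto_const])
    show "\<forall>\<^sub>F x in at_top. hf x \<le> Psi x" using ev0 by (rule eventually_mono) (use basic in \<open>auto intro: less_imp_le\<close>)
    show "\<forall>\<^sub>F x in at_top. Psi x \<le> 1" using ev0 by (rule eventually_mono) (use basic in \<open>auto intro: less_imp_le\<close>)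
  qed
  have lowl: "((\<lambda>x. 2 * Psi x / ((1 + Psi x) * (1 + (Psi x)^2))) \<longlongrightarrow> 2 * 1 / ((1 + 1) * (1 + 1^2))) at_top"
    by (intro tendsto_intros Pl) auto
  have tl: "((\<lambda>x. x * (1 - Psi x)) \<longlongrightarrow> 1/2) at_top"
  proof (rule tendsto_sandwich[OF _ _ _ hl2])
    show "((\<lambda>x. 2 * Psi x / ((1 + Psi x) * (1 + (Psi x)^2))) \<longlongrightarrow> 1/2) at_top" using lowl by simp
    show "\<forall>\<^sub>F x in at_top. 2 * Psi x / ((1 + Psi x) * (1 + (Psi x)^2)) \<le> x * (1 - Psi x)"
      using ev0
    proof (rule eventually_mono)
      fix x :: real assume x: "0 < x"
      note b = basic[OF x]
      have "2 * Psi x / x < 1 - (Psi x)^4" using b by simp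
      also have "1 - (Psi x)^4 = (1 - Psi x) * ((1 + Psi x) * (1 + (Psi x)^2))" by (simp add: algebra_simps power2_eq_square power4_eq_xxxx)
      finally have "2 * Psi x < x * ((1 - Psi x) * ((1 + Psi x) * (1 + (Psi x)^2)))"
        using x by (simp add: divide_less_eq mult.commute)
      moreover have "(1 + Psi x) * (1 + (Psi x)^2) > 0" using b by (simp add: add_pos_nonneg)
      ultimately show "2 * Psi x / ((1 + Psi x) * (1 + (Psi x)^2)) \<le> x * (1 - Psi x)"
        by (simp add: divide_le_eq mult.assoc)
    qed
    show "\<forall>\<^sub>F x in at_top. x * (1 - Psi x) \<le> x * (1 - hf x)"
      using ev0 by (rule eventually_mono) (use basic in \<open>auto intro: less_imp_le\<close>)
  qed
  have Al: "((\<lambda>x. x * ln (Psi x)) \<longlongrightarrow> -1/2) at_top"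
  proof (rule tendsto_sandwich)
    show "((\<lambda>x. - (x * (1 - Psi x)) / Psi x) \<longlongrightarrow> -1/2) at_top"
      using tendsto_divide[OF tendsto_minus[OF tl] Pl] by simp
    show "((\<lambda>x. - (x * (1 - Psi x))) \<longlongrightarrow> -1/2) at_top"
      using tendsto_minus[OF tl] by simp
    show "\<forall>\<^sub>F x in at_top. - (x * (1 - Psi x)) / Psi x \<le> x * ln (Psi x)"
      using ev0
    proof (rule eventually_mono)
      fix x :: real assume x: "0 < x"
      note b = basic[OF x]
      have "1 - 1 / Psi x \<le> ln (Psi x)" by (rule ln_ge) (use b in simp)
      hence "x * (1 - 1 / Psi x) \<le> x * ln (Psi x)" using x by (simp add: mult_left_mono)
      moreover have "x * (1 - 1 / Psi x) = - (x * (1 - Psi x)) / Psi x" using b by (simp add: field_simps)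
      ultimately show "- (x * (1 - Psi x)) / Psi x \<le> x * ln (Psi x)" by simp
    qed
    show "\<forall>\<^sub>F x in at_top. x * ln (Psi x) \<le> - (x * (1 - Psi x))"
      using ev0
    proof (rule eventually_mono)
      fix x :: real assume x: "0 < x"
      note b = basic[OF x]
      have "ln (Psi x) \<le> Psi x - 1" by (rule ln_le_minus_one) (use b in simp)
      hence "x * ln (Psi x) \<le> x * (Psi x - 1)" using x by (simp add: mult_left_mono)
      thus "x * ln (Psi x) \<le> - (x * (1 - Psi x))" by (simp add: algebra_simps)
    qed
  qed
  have ul: "((\<lambda>x::real. 2 * Psi x * (1 / x)) \<longlongrightarrow> 2 * 1 * 0) at_top"
    by (intro tendsto_intros Pl) real_asymp
  have vl: "((\<lambda>x. 1 - 2 * Psi x / x) \<longlongrightarrow> 1) at_top"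
    using tendsto_diff[OF tendsto_const ul, of 1] by simp
  have Bl: "((\<lambda>x. x * ln (1 - 2 * Psi x / x)) \<longlongrightarrow> -2) at_top"
  proof (rule tendsto_sandwich)
    show "((\<lambda>x. - (2 * Psi x) / (1 - 2 * Psi x / x)) \<longlongrightarrow> -2) at_top"
      using tendsto_divide[OF tendsto_minus[OF tendsto_mult[OF tendsto_const Pl, of 2]] vl] by simp
    show "((\<lambda>x. - (2 * Psi x)) \<longlongrightarrow> -2) at_top"
      using tendsto_minus[OF tendsto_mult[OF tendsto_const Pl, of 2]] by simp
    show "\<forall>\<^sub>F x in at_top. - (2 * Psi x) / (1 - 2 * Psi x / x) \<le> x * ln (1 - 2 * Psi x / x)"
      using ev0
    proof (rule eventually_mono)
      fix x :: real assume x: "0 < x"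
      note b = basic[OF x]
      have "1 - 1 / (1 - 2 * Psi x / x) \<le> ln (1 - 2 * Psi x / x)" by (rule ln_ge) (use b in simp)
      hence "x * (1 - 1 / (1 - 2 * Psi x / x)) \<le> x * ln (1 - 2 * Psi x / x)" using x by (simp add: mult_left_mono)
      moreover have "x * (1 - 1 / (1 - 2 * Psi x / x)) = - (2 * Psi x) / (1 - 2 * Psi x / x)"
        using b x by (simp add: field_simps)
      ultimately show "- (2 * Psi x) / (1 - 2 * Psi x / x) \<le> x * ln (1 - 2 * Psi x / x)" by simp
    qed
    show "\<forall>\<^sub>F x in at_top. x * ln (1 - 2 * Psi x / x) \<le> - (2 * Psi x)"
      using ev0
    proof (rule eventually_mono)
      fix x :: real assume x: "0 < x"
      note b = basic[OF x]
      have "ln (1 - 2 * Psi x / x) \<le> (1 - 2 * Psi x / x) - 1" by (rule ln_le_minus_one) (use b in simp)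
      hence "x * ln (1 - 2 * Psi x / x) \<le> x * ((1 - 2 * Psi x / x) - 1)" by (rule mult_left_mono) (use x in simp)
      moreover have "x * ((1 - 2 * Psi x / x) - 1) = - (2 * Psi x)" using x by simp
      ultimately show "x * ln (1 - 2 * Psi x / x) \<le> - (2 * Psi x)" by simp
    qed
  qed
  have "((\<lambda>x. (x * ln (1 - 2 * Psi x / x)) / (x * ln (Psi x))) \<longlongrightarrow> (-2) / (-1/2)) at_top"
    by (rule tendsto_divide[OF Bl Al]) simp
  hence lim: "((\<lambda>x. (x * ln (1 - 2 * Psi x / x)) / (x * ln (Psi x))) \<longlongrightarrow> 4) at_top" by simp
  have eq: "\<forall>\<^sub>F x in at_top. (x * ln (1 - 2 * Psi x / x)) / (x * ln (Psi x)) = lam x"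
    using ev0 by (rule eventually_mono) (simp add: lam_def)
  show ?thesis by (rule tendsto_cong[THEN iffD1, OF eq lim])
qed


theorem mainTheorem2:
  shows "(\<forall>x>0. 2 < lam x \<and> lam x < 4)
    \<and> (lam \<longlongrightarrow> 2) (at_right 0)
    \<and> (lam \<longlongrightarrow> 4) at_top
    \<and> (\<forall>a::real. a < 1/2 \<longrightarrow>
          (\<exists>K r. K > 1 \<and> r > 0 \<and> r = Psi (2 * K * r) \<and> \<not> ((1 - 1/K) powr a < r)))
    \<and> (\<forall>b::real. b > 1/4 \<longrightarrow>
          (\<exists>K r. K > 1 \<and> r > 0 \<and> r = Psi (2 * K * r) \<and> \<not> (r < (1 - 1/K) powr b)))"
proof (intro conjI allI impI)
  show "2 < lam x" "lam x < 4" if "x > 0" for x using lam_bounds[OF that] by auto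
  show "(lam \<longlongrightarrow> 2) (at_right 0)" by (rule lim0)
  show "(lam \<longlongrightarrow> 4) at_top" by (rule limtop)
next
  fix a :: real assume a: "a < 1/2"
  have "\<exists>x>0. a * lam x \<le> 1"
  proof (cases "a \<le> 0")
    case True
    have "lam 1 > 2" using lam_bounds[of 1] by simp
    hence "a * lam 1 \<le> 0" using True by (intro mult_nonpos_nonneg) auto
    thus ?thesis by (intro exI[of _ 1]) auto
  next
    case False
    hence "2 < 1/a" using a by (simp add: field_simps)
    hence ev: "\<forall>\<^sub>F x in at_right 0. lam x < 1/a" by (rule order_tendstoD(2)[OF lim0])
    have "\<forall>\<^sub>F x in at_right 0. 0 < x \<and> lam x < 1/a"
      using eventually_conj[OF eventually_at_right_less ev] by simp
    then obtain x where x: "0 < x" "lam x < 1/a"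
      using eventually_happens'[OF trivial_limit_at_right_real] by blast
    have "a * lam x < a * (1/a)" using x False by (intro mult_strict_left_mono) auto
    thus ?thesis using x False by (intro exI[of _ x]) auto
  qed
  then obtain x where x: "x > 0" "a * lam x \<le> 1" by auto
  note w = witness[OF x(1)]
  show "\<exists>K r. K > 1 \<and> r > 0 \<and> r = Psi (2 * K * r) \<and> \<not> ((1 - 1/K) powr a < r)"
    by (intro exI conjI) (rule w(1), rule w(2), rule w(3), rule w(4)[OF x(2)])
next
  fix b :: real assume b: "b > 1/4"
  hence bp: "b > 0" by simp
  hence "1/b < 4" using b by (simp add: field_simps)
  hence ev: "\<forall>\<^sub>F x in at_top. 1/b < lam x" by (rule order_tendstoD(1)[OF limtop])
  have "\<forall>\<^sub>F x in at_top. 0 < x \<and> 1/b < lam x"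
    using eventually_conj[OF eventually_gt_at_top ev] by simp
  then obtain x where x: "0 < x" "1/b < lam x"
    using eventually_happens'[OF trivial_limit_at_top_linorder] by blast
  have "b * (1/b) < b * lam x" using x bp by (intro mult_strict_left_mono) auto
  hence xb: "b * lam x \<ge> 1" using bp by simp
  note w = witness[OF x(1)]
  show "\<exists>K r. K > 1 \<and> r > 0 \<and> r = Psi (2 * K * r) \<and> \<not> (r < (1 - 1/K) powr b)"
    by (intro exI conjI) (rule w(1), rule w(2), rule w(3), rule w(5)[OF xb])
qed


end
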